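(* Let $\alpha\in(0,1]$, let $C\subset\mathbb{R}^2$ be an $\alpha$-fat convex body and $S\subset\mathbb{R}^2$ a finite point set. Suppose that $abc$ and $cda$ are two adjacent bounded (triangular) faces of the embedded graph $D_C(S)$, sharing the edge $ac$. Then $\angle abc+\angle cda\le 360^\circ-2\arcsin\alpha$.
   Context: A convex body is a convex compact set with nonempty interior; a homothet of $C$ is $\lambda C+x$ with $\lambda>0$. $C$ is $\alpha$-fat if $B(x,\alpha r)\subseteq C\subseteq B(x,r)$ for some $x$ and $r>0$. The Delaunay graph $D_C(S)$ is the graph with vertex set $S$ in which $p,q$ are adjacent iff some homothet of $C$ contains $p$ and $q$ and no other point of $S$, drawn in the plane with straight-line edges. *)

theory Defs
  imports "HOL-Analysis.Analysis"
begin

type_synonym pt = "real ^ 2"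

definition convex_body :: "pt set \<Rightarrow> bool" where
  "convex_body C \<longleftrightarrow> convex C \<and> compact C \<and> interior C \<noteq> {}"

definition fat :: "real \<Rightarrow> pt set \<Rightarrow> bool" where
  "fat \<alpha> C \<longleftrightarrow> (\<exists>x r. r > 0 \<and> cball x (\<alpha> * r) \<subseteq> C \<and> C \<subseteq> cball x r)"

definition homothet :: "pt set \<Rightarrow> real \<Rightarrow> pt \<Rightarrow> pt set" where
  "homothet C l t = (\<lambda>y. l *\<^sub>R y + t) ` C"

definition delaunay_edge :: "pt set \<Rightarrow> pt set \<Rightarrow> pt \<Rightarrow> pt \<Rightarrow> bool" where
  "delaunay_edge C S p q \<longleftrightarrow> p \<in> S \<and> q \<in> S \<and> p \<noteq> q \<and>
     (\<exists>l t. l > 0 \<and> p \<in> homothet C l t \<and> q \<in> homothet C l t \<and>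
            homothet C l t \<inter> S \<subseteq> {p, q})"

definition delaunay_drawing :: "pt set \<Rightarrow> pt set \<Rightarrow> pt set" where
  "delaunay_drawing C S = S \<union> \<Union>{closed_segment p q | p q. delaunay_edge C S p q}"

definition triangular_face :: "pt set \<Rightarrow> pt set \<Rightarrow> pt \<Rightarrow> pt \<Rightarrow> pt \<Rightarrow> bool" where
  "triangular_face C S a b c \<longleftrightarrow>
     delaunay_edge C S a b \<and> delaunay_edge C S b c \<and> delaunay_edge C S c a \<and>
     \<not> collinear {a, b, c} \<and>
     interior (convex hull {a, b, c}) \<in> components (- delaunay_drawing C S)"

definition angle :: "pt \<Rightarrow> pt \<Rightarrow> pt \<Rightarrow> real" where
  "angle a b c = arccos (((a - b) \<bullet> (c - b)) / (norm (a - b) * norm (c - b)))"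

end

theory Submission
  imports Defs
begin



definition cross2 :: "pt \<Rightarrow> pt \<Rightarrow> real" where
  "cross2 u v = u$1 * v$2 - u$2 * v$1"

lemma inner2: "inner (u::pt) v = u$1 * v$1 + u$2 * v$2"
  by (simp add: inner_vec_def sum_2)

lemma norm2: "(norm (u::pt))\<^sup>2 = (u$1)\<^sup>2 + (u$2)\<^sup>2"
  unfolding power2_norm_eq_inner inner2 by (simp add: power2_eq_square)

lemma frame_inner:
  assumes "(e$1)\<^sup>2 + (e$2)\<^sup>2 = 1"
  shows "inner (v::pt) w = inner e v * inner e w + cross2 e v * cross2 e w"
proof -
  have "inner e v * inner e w + cross2 e v * cross2 e w = ((e$1)\<^sup>2 + (e$2)\<^sup>2) * inner v w"
    by (simp add: inner2 cross2_def power2_eq_square algebra_simps)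
  then show ?thesis using assms by simp
qed

lemma frame_cross:
  assumes "(e$1)\<^sup>2 + (e$2)\<^sup>2 = 1"
  shows "cross2 (v::pt) w = inner e v * cross2 e w - cross2 e v * inner e w"
proof -
  have "inner e v * cross2 e w - cross2 e v * inner e w = ((e$1)\<^sup>2 + (e$2)\<^sup>2) * cross2 v w"
    by (simp add: inner2 cross2_def power2_eq_square algebra_simps)
  then show ?thesis using assms by simp
qed

lemma lagrange2: "(norm (u::pt))\<^sup>2 * (norm v)\<^sup>2 = (inner u v)\<^sup>2 + (cross2 u v)\<^sup>2"
  unfolding norm2 by (simp add: inner2 cross2_def power2_eq_square algebra_simps)

lemma cross2_scaleR: "cross2 (k *\<^sub>R u) v = k * cross2 u v" "cross2 u (k *\<^sub>R v) = k * cross2 u v"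
  by (simp_all add: cross2_def algebra_simps)

lemma cross2_swap_tri: "cross2 (a - b) (c - b) = cross2 (c - a) (b - a)"
  by (simp add: cross2_def algebra_simps)

lemma cross2_swap_ac: "cross2 (a - c) (b - c) = - cross2 (c - a) (b - a)"
  by (simp add: cross2_def algebra_simps)

lemma angle_sym: "angle a b c = angle c b a"
  by (simp add: angle_def inner_commute mult.commute)



lemma cs2: fixes a b c d :: real shows "(a*c + b*d)\<^sup>2 \<le> (a\<^sup>2+b\<^sup>2)*(c\<^sup>2+d\<^sup>2)"
proof -
  have "(a\<^sup>2+b\<^sup>2)*(c\<^sup>2+d\<^sup>2) = (a*c+b*d)\<^sup>2 + (a*d - b*c)\<^sup>2"
    by (simp add: power2_eq_square algebra_simps)
  then show ?thesis by simp
qed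

lemma lemG:
  fixes L p q \<rho> u1 u2 b1 b2 n1 n2 :: real
  assumes u: "u1\<^sup>2 + u2\<^sup>2 = 1" and u2: "u2 > 0"
    and e1v: "u1 * q - u2 * p \<ge> - \<rho>" and uv: "u1 * p + u2 * q \<ge> 0"
    and pL: "2 * p \<ge> L" and L: "L > 0" and b2: "b2 > 0"
    and n: "n1\<^sup>2 + n2\<^sup>2 = 1"
    and s1: "n1 * b1 + n2 * b2 > 0" and s2: "n1 * b1 + n2 * b2 > n1 * L"
    and s3: "n1 * b1 + n2 * b2 > n1 * p + n2 * q + \<rho>"
  shows "(b1\<^sup>2 - L * b1 + b2\<^sup>2) * u2 + L * b2 * u1 \<ge> 0"
proof (rule ccontr)
  assume neg: "\<not> ?thesis"
  define R where "R = L / (2 * u2)"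
  define o1 where "o1 = L / 2"
  define o2 where "o2 = - R * u1"
  have R: "R > 0" using L u2 by (simp add: R_def)
  have LR: "L = 2 * R * u2" using u2 by (simp add: R_def)
  have pow: "(b1 - o1)\<^sup>2 + (b2 - o2)\<^sup>2 - R\<^sup>2 = ((b1\<^sup>2 - L * b1 + b2\<^sup>2) * u2 + L * b2 * u1) / u2"
  proof -
    have "(b1 - o1)\<^sup>2 + (b2 - o2)\<^sup>2 - R\<^sup>2 = b1\<^sup>2 - L * b1 + b2\<^sup>2 + 2 * b2 * R * u1 + R\<^sup>2 * (u1\<^sup>2 + u2\<^sup>2 - 1)"
      unfolding o1_def o2_def LR by (simp add: power2_eq_square algebra_simps)
    also have "\<dots> = b1\<^sup>2 - L * b1 + b2\<^sup>2 + 2 * b2 * R * u1" using u by simp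
    also have "\<dots> = ((b1\<^sup>2 - L * b1 + b2\<^sup>2) * u2 + L * b2 * u1) / u2"
      using u2 unfolding LR by (simp add: field_simps)
    finally show ?thesis .
  qed
  have inside: "(b1 - o1)\<^sup>2 + (b2 - o2)\<^sup>2 < R\<^sup>2"
  proof -
    have "((b1\<^sup>2 - L * b1 + b2\<^sup>2) * u2 + L * b2 * u1) / u2 < 0"
      using neg u2 by (simp add: divide_neg_pos)
    then show ?thesis using pow by linarith
  qed
  have cs: "n1 * (b1 - o1) + n2 * (b2 - o2) < R"
  proof -
    have "(n1 * (b1 - o1) + n2 * (b2 - o2))\<^sup>2 \<le> (n1\<^sup>2 + n2\<^sup>2) * ((b1 - o1)\<^sup>2 + (b2 - o2)\<^sup>2)"
      by (rule cs2)
    also have "\<dots> < R\<^sup>2" using n inside by simp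
    finally have "(n1 * (b1 - o1) + n2 * (b2 - o2))\<^sup>2 < R\<^sup>2" .
    then show ?thesis by (rule power_less_imp_less_base) (use R in linarith)
  qed
  have K1: "n1 * b1 + n2 * b2 < n1 * o1 + n2 * o2 + R" using cs by (simp add: algebra_simps)
  show False
  proof (cases "n2 > u1")
    case True
    define w1 where "w1 = p - o1"
    define w2 where "w2 = q - o2"
    have w1: "w1 \<ge> 0" using pL by (simp add: w1_def o1_def)
    have uw: "u1 * w1 + u2 * w2 \<ge> 0"
    proof -
      have "u1 * w1 + u2 * w2 = u1 * p + u2 * q"
        unfolding w1_def w2_def o1_def o2_def LR by (simp add: algebra_simps)
      then show ?thesis using uv by simp
    qed
    define lam where "lam = (n2 - u1) / u2"
    define mu where "mu = (1 + n1 * u2 - u1 * n2) / u2"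
    have lam: "lam \<ge> 0" using True u2 by (simp add: lam_def)
    have cr: "(n1 * u2 - u1 * n2)\<^sup>2 \<le> 1"
    proof -
      have "(n1 * u2 + n2 * (- u1))\<^sup>2 \<le> (n1\<^sup>2 + n2\<^sup>2) * (u2\<^sup>2 + (-u1)\<^sup>2)"
        by (rule cs2)
      then show ?thesis using n u by (simp add: algebra_simps)
    qed
    have "n1 * u2 - u1 * n2 \<ge> -1"
      using cr by (simp add: abs_square_le_1 abs_le_iff)
    then have mu: "mu \<ge> 0" using u2 by (simp add: mu_def)
    have ident: "(n1 + u2) * w1 + (n2 - u1) * w2 = lam * (u1 * w1 + u2 * w2) + mu * w1"
    proof -
      have "lam * (u1 * w1 + u2 * w2) + mu * w1 = ((n2 - u1) * (u1 * w1 + u2 * w2) + (1 + n1 * u2 - u1 * n2) * w1) / u2"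
        unfolding lam_def mu_def using u2 by (simp add: field_simps)
      also have "(n2 - u1) * (u1 * w1 + u2 * w2) + (1 + n1 * u2 - u1 * n2) * w1 = ((n1 + u2) * w1 + (n2 - u1) * w2) * u2 + (1 - u1\<^sup>2 - u2\<^sup>2) * w1"
        by (simp add: power2_eq_square algebra_simps)
      also have "\<dots> = ((n1 + u2) * w1 + (n2 - u1) * w2) * u2" using u by simp
      finally show ?thesis using u2 by simp
    qed
    have nonneg: "(n1 + u2) * w1 + (n2 - u1) * w2 \<ge> 0"
      unfolding ident using lam mu uw w1 by simp
    have "(n1 + u2) * w1 + (n2 - u1) * w2 = n1 * p + n2 * q - (n1 * o1 + n2 * o2) - (u1 * q - u2 * p) - R * (u1\<^sup>2 + u2\<^sup>2)"
      unfolding w1_def w2_def o1_def o2_def LR by (simp add: power2_eq_square algebra_simps)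
    then have "n1 * p + n2 * q - (n1 * o1 + n2 * o2) \<ge> R - \<rho>" using nonneg e1v u by simp
    then show False using K1 s3 by linarith
  next
    case False
    define z2 where "z2 = o2 + R * n2"
    have z2: "z2 \<le> 0" using False R unfolding z2_def o2_def
      by (simp add: algebra_simps mult_left_mono)
    define lam where "lam = b2 / (b2 - z2)"
    have lam0: "lam > 0" and lam1: "lam \<le> 1" using b2 z2 by (auto simp: lam_def field_simps)
    define s where "s = (1 - lam) * b1 + lam * (o1 + R * n1)"
    have P2: "(1 - lam) * b2 + lam * z2 = 0" using b2 z2 unfolding lam_def by (simp add: field_simps)
    define X1 where "X1 = b1 - o1"
    define X2 where "X2 = b2 - o2"
    have XY: "X1 * (R * n1) + X2 * (R * n2) \<le> R\<^sup>2"
    proof -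
      have "X1 * (R * n1) + X2 * (R * n2) = R * (n1 * (b1 - o1) + n2 * (b2 - o2))"
        unfolding X1_def X2_def by (simp add: algebra_simps)
      also have "\<dots> \<le> R * R" using cs R by simp
      finally show ?thesis by (simp add: power2_eq_square)
    qed
    have Pdist: "((1 - lam) * X1 + lam * (R * n1))\<^sup>2 + ((1 - lam) * X2 + lam * (R * n2))\<^sup>2 \<le> R\<^sup>2"
    proof -
      have "((1 - lam) * X1 + lam * (R * n1))\<^sup>2 + ((1 - lam) * X2 + lam * (R * n2))\<^sup>2
          = (1 - lam)\<^sup>2 * (X1\<^sup>2 + X2\<^sup>2) + 2 * lam * (1 - lam) * (X1 * (R * n1) + X2 * (R * n2)) + lam\<^sup>2 * R\<^sup>2 * (n1\<^sup>2 + n2\<^sup>2)"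
        by (simp add: power2_eq_square algebra_simps)
      also have "\<dots> \<le> (1 - lam)\<^sup>2 * R\<^sup>2 + 2 * lam * (1 - lam) * R\<^sup>2 + lam\<^sup>2 * R\<^sup>2"
      proof -
        have "(1 - lam)\<^sup>2 * (X1\<^sup>2 + X2\<^sup>2) \<le> (1 - lam)\<^sup>2 * R\<^sup>2"
          using inside unfolding X1_def X2_def by (simp add: mult_left_mono)
        moreover have "2 * lam * (1 - lam) * (X1 * (R * n1) + X2 * (R * n2)) \<le> 2 * lam * (1 - lam) * R\<^sup>2"
          using XY lam0 lam1 by (simp add: mult_left_mono)
        ultimately show ?thesis using n by simp
      qed
      also have "\<dots> = R\<^sup>2" by (simp add: power2_eq_square algebra_simps)
      finally show ?thesis .
    qed
    have sx: "s - o1 = (1 - lam) * X1 + lam * (R * n1)" unfolding s_def X1_def by (simp add: algebra_simps)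
    have sy: "- o2 = (1 - lam) * X2 + lam * (R * n2)"
      using P2 unfolding X2_def z2_def by (simp add: algebra_simps)
    have "(s - o1)\<^sup>2 + o2\<^sup>2 \<le> R\<^sup>2" using Pdist sx sy by (metis power2_minus)
    moreover have "R\<^sup>2 - o2\<^sup>2 = L\<^sup>2 / 4"
    proof -
      have "R\<^sup>2 - o2\<^sup>2 = R\<^sup>2 * (1 - u1\<^sup>2)" unfolding o2_def by (simp add: power2_eq_square algebra_simps)
      also have "\<dots> = R\<^sup>2 * u2\<^sup>2" proof - have "1 - u1\<^sup>2 = u2\<^sup>2" using u by simp then show ?thesis by simp qed
      also have "\<dots> = L\<^sup>2 / 4" unfolding LR by (simp add: power2_eq_square)
      finally show ?thesis .
    qed
    ultimately have "(s - o1)\<^sup>2 \<le> L\<^sup>2 / 4" by linarith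
    then have sL: "s * (s - L) \<le> 0" unfolding o1_def by (simp add: power2_eq_square algebra_simps)
    have s0: "0 \<le> s" and sL2: "s \<le> L"
    proof -
      show "0 \<le> s"
      proof (rule ccontr)
        assume "\<not> 0 \<le> s" then have "0 < s * (s - L)" using L by (intro mult_neg_neg) auto
        then show False using sL by simp
      qed
      show "s \<le> L"
      proof (rule ccontr)
        assume "\<not> s \<le> L" then have "0 < s * (s - L)" using L by (intro mult_pos_pos) auto
        then show False using sL by simp
      qed
    qed
    have "n1 * s + n2 * 0 = (1 - lam) * (n1 * b1 + n2 * b2) + lam * (n1 * o1 + n2 * o2 + R)"
    proof -
      have A: "n1 * s + n2 * ((1 - lam) * b2 + lam * z2) = (1 - lam) * (n1 * b1 + n2 * b2) + lam * (n1 * o1 + (n2 * z2 + R * n1 * n1))"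
        unfolding s_def by (simp add: algebra_simps)
      have B: "n2 * z2 + R * n1 * n1 = n2 * o2 + R"
        unfolding z2_def using n by (simp add: power2_eq_square algebra_simps) (metis distrib_left mult.right_neutral)
      from A have "n1 * s + n2 * ((1 - lam) * b2 + lam * z2) = (1 - lam) * (n1 * b1 + n2 * b2) + lam * (n1 * o1 + (n2 * o2 + R))"
        unfolding B .
      then show ?thesis unfolding P2 by simp
    qed
    then have "n1 * s - (n1 * b1 + n2 * b2) = lam * ((n1 * o1 + n2 * o2 + R) - (n1 * b1 + n2 * b2))"
      by (simp add: algebra_simps)
    moreover have "lam * ((n1 * o1 + n2 * o2 + R) - (n1 * b1 + n2 * b2)) \<ge> 0"
      using K1 lam0 by simp
    ultimately have "n1 * s \<ge> n1 * b1 + n2 * b2" by simp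
    moreover have "n1 * s \<le> max 0 (n1 * L)"
    proof (cases "n1 \<ge> 0")
      case True then have "n1 * s \<le> n1 * L" using sL2 by (simp add: mult_left_mono)
      then show ?thesis by simp
    next
      case False then have "n1 * s \<le> 0" using s0 by (simp add: mult_nonpos_nonneg)
      then show ?thesis by simp
    qed
    ultimately show False using s1 s2 by linarith
  qed
qed

lemma side:
  fixes L p q \<rho> d s co b1 b2 N D :: real
  assumes L: "L > 0" and pL: "2*p \<ge> L" and rho: "\<rho> \<ge> 0"
    and d: "d = sqrt(p\<^sup>2 + q\<^sup>2)"
    and s: "s = min 1 (\<rho>/d)" and co: "co = sqrt(1 - s\<^sup>2)"
    and b2: "b2 > 0"
    and sep: "\<exists>n1 n2. n1\<^sup>2 + n2\<^sup>2 = 1 \<and> n1*b1 + n2*b2 > 0 \<and> n1*b1+n2*b2 > n1*L \<and> n1*b1+n2*b2 > n1*p + n2*q + \<rho>"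
    and N: "N > 0" "N\<^sup>2 = D\<^sup>2 + (L*b2)\<^sup>2" and D: "D = b1\<^sup>2 - L*b1 + b2\<^sup>2"
  shows "arccos (D/N) \<le> pi - (arcsin s + arctan (q/p))"
proof -
  have p: "p > 0" using L pL by simp
  have dp: "d \<ge> p" unfolding d using p by (metis abs_of_pos le_add_same_cancel1 real_sqrt_abs real_sqrt_le_mono zero_le_power2)
  then have d0: "d > 0" using p by simp
  have dd: "d\<^sup>2 = p\<^sup>2 + q\<^sup>2" unfolding d by simp
  have s0: "0 \<le> s" and s1: "s \<le> 1" using rho d0 by (auto simp: s)
  have sd: "s * d \<le> \<rho>"
  proof (cases "\<rho>/d \<le> 1")
    case True then show ?thesis using d0 by (simp add: s)
  next
    case False then have "d < \<rho>" using d0 by (simp add: field_simps)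
    then show ?thesis using False by (simp add: s)
  qed
  have s2: "s\<^sup>2 \<le> 1" by (rule power_le_one[OF s0 s1])
  have co2: "co\<^sup>2 = 1 - s\<^sup>2" unfolding co by (rule real_sqrt_pow2) (use s2 in linarith)
  have co0: "co \<ge> 0" unfolding co by (rule real_sqrt_ge_zero) (use s2 in linarith)
  define u1 where "u1 = (co*p - s*q)/d"
  define u2 where "u2 = (co*q + s*p)/d"
  have uu: "u1\<^sup>2 + u2\<^sup>2 = 1"
  proof -
    have "u1\<^sup>2 + u2\<^sup>2 = (co\<^sup>2 + s\<^sup>2) * (p\<^sup>2 + q\<^sup>2) / d\<^sup>2"
      unfolding u1_def u2_def using d0 by (simp add: power2_eq_square field_simps)
    then show ?thesis using co2 dd d0 p by simp
  qed
  have e1v: "u1 * q - u2 * p \<ge> - \<rho>"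
  proof -
    have "u1 * q - u2 * p = - s * (p\<^sup>2 + q\<^sup>2) / d" unfolding u1_def u2_def
      using d0 by (simp add: power2_eq_square field_simps)
    also have "\<dots> = - s * d\<^sup>2 / d" using dd by simp
    also have "\<dots> = - s * d" using d0 by (simp add: power2_eq_square)
    finally show ?thesis using sd by simp
  qed
  have uv: "u1 * p + u2 * q \<ge> 0"
  proof -
    have "u1 * p + u2 * q = co * (p\<^sup>2 + q\<^sup>2) / d" unfolding u1_def u2_def
      using d0 by (simp add: power2_eq_square field_simps)
    then show ?thesis using co0 d0 by simp
  qed
  define \<theta> where "\<theta> = arcsin s + arctan (q/p)"
  have sq: "sqrt (1 + (q/p)\<^sup>2) = d / p"
  proof -
    have "1 + (q/p)\<^sup>2 = (p\<^sup>2 + q\<^sup>2) / p\<^sup>2" using p by (simp add: field_simps power2_eq_square)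
    then have "sqrt (1 + (q/p)\<^sup>2) = sqrt (p\<^sup>2 + q\<^sup>2) / sqrt (p\<^sup>2)" by (simp add: real_sqrt_divide)
    then show ?thesis using p d by simp
  qed
  have ca: "cos (arctan (q/p)) = p / d" unfolding cos_arctan sq using p d0 by simp
  have sa: "sin (arctan (q/p)) = q / d" unfolding sin_arctan sq using p d0 by simp
  have cs: "cos (arcsin s) = co" unfolding co using s0 s1 by (simp add: cos_arcsin)
  have ss: "sin (arcsin s) = s" using s0 s1 by simp
  have cth: "cos \<theta> = u1" unfolding \<theta>_def cos_add ca sa cs ss u1_def using d0 by (simp add: field_simps)
  have sth: "sin \<theta> = u2" unfolding \<theta>_def sin_add ca sa cs ss u2_def using d0 by (simp add: field_simps)
  have as0: "0 \<le> arcsin s" using arcsin_le_arcsin[of 0 s] s0 s1 by simp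
  have as1: "arcsin s \<le> pi/2" using arcsin_ubound s0 s1 by simp
  have th1: "- (pi/2) < \<theta>" "\<theta> < pi" using as0 as1 arctan_bounded[of "q/p"] unfolding \<theta>_def by auto
  have DN: "\<bar>D\<bar> \<le> N"
  proof -
    have "D\<^sup>2 \<le> N\<^sup>2" using N by simp
    then show ?thesis using N(1) by (metis abs_le_square_iff abs_of_pos)
  qed
  have DN1: "-1 \<le> D/N" "D/N \<le> 1" using DN N(1) by (auto simp: field_simps abs_le_iff)
  define A where "A = arccos (D/N)"
  have A0: "0 \<le> A" and A1: "A \<le> pi" using arccos_bounded[OF DN1] by (auto simp: A_def)
  have cA: "cos A = D/N" using DN1 by (simp add: A_def)
  have sA: "sin A = L*b2/N"
  proof -
    have "sin A = sqrt (1 - (D/N)\<^sup>2)" unfolding A_def using DN1 by (simp add: sin_arccos)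
    also have "1 - (D/N)\<^sup>2 = (L*b2/N)\<^sup>2"
    proof -
      have "(L*b2/N)\<^sup>2 = (N\<^sup>2 - D\<^sup>2)/N\<^sup>2" using N by (simp add: power_divide)
      also have "\<dots> = 1 - (D/N)\<^sup>2" using N(1) by (simp add: power_divide diff_divide_distrib)
      finally show ?thesis by simp
    qed
    also have "sqrt ((L*b2/N)\<^sup>2) = L*b2/N" using L b2 N(1) by simp
    finally show ?thesis .
  qed
  show ?thesis
  proof (cases "u2 > 0")
    case False
    have "\<theta> \<le> 0"
    proof (rule ccontr)
      assume "\<not> \<theta> \<le> 0"
      then have "sin \<theta> > 0" using th1 by (intro sin_gt_zero) auto
      then show False using False sth by simp
    qed
    then show ?thesis using A1 unfolding A_def \<theta>_def by simp
  next
    case True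
    obtain n1 n2 where n: "n1\<^sup>2 + n2\<^sup>2 = 1" "n1*b1 + n2*b2 > 0" "n1*b1+n2*b2 > n1*L" "n1*b1+n2*b2 > n1*p + n2*q + \<rho>"
      using sep by blast
    have G: "(b1\<^sup>2 - L * b1 + b2\<^sup>2) * u2 + L * b2 * u1 \<ge> 0"
      by (rule lemG[OF uu True e1v uv pL L b2 n])
    have "sin (A + \<theta>) = (L*b2*u1 + D*u2)/N"
      unfolding sin_add sA cA cth sth by (simp add: add_divide_distrib algebra_simps)
    also have "\<dots> \<ge> 0" using G N(1) unfolding D by (simp add: algebra_simps)
    finally have sin0: "sin (A + \<theta>) \<ge> 0" .
    have "A + \<theta> \<le> pi"
    proof (rule ccontr)
      assume "\<not> A + \<theta> \<le> pi"
      then have "sin (A + \<theta>) < 0" using A1 th1 by (intro sin_lt_zero) auto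
      then show False using sin0 by simp
    qed
    then show ?thesis unfolding A_def \<theta>_def by simp
  qed
qed


lemma geo_side:
  fixes H :: "pt set" and a b c x :: pt and \<rho> \<sigma> :: real
  assumes H: "convex H" "closed H" and aH: "a \<in> H" and cH: "c \<in> H" and bH: "b \<notin> H"
    and E: "cball x \<rho> \<subseteq> H" and rho: "\<rho> \<ge> 0" and ac: "a \<noteq> c" and xc: "dist x c \<le> dist x a"
    and sg: "\<sigma> = 1 \<or> \<sigma> = -1" and sd: "\<sigma> * cross2 (c - a) (b - a) > 0"
  shows "angle a b c \<le> pi - (arcsin (min 1 (\<rho> / dist x a)) + arctan (\<sigma> * cross2 (c - a) (x - a) / inner (c - a) (x - a)))"
proof -
  have sg2: "\<sigma> * \<sigma> = 1" using sg by auto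
  define L where "L = norm (c - a)"
  have L: "L > 0" using ac by (simp add: L_def)
  define e where "e = (1/L) *\<^sub>R (c - a)"
  have ne: "norm e = 1" using L by (simp add: e_def L_def)
  have e1: "(e$1)\<^sup>2 + (e$2)\<^sup>2 = 1" using ne norm2[of e] by simp
  have ce: "c - a = L *\<^sub>R e" using L by (simp add: e_def)
  define P where "P y = inner e (y - a)" for y
  define Q where "Q y = \<sigma> * cross2 e (y - a)" for y
  have fr: "inner v w = inner e v * inner e w + (\<sigma> * cross2 e v) * (\<sigma> * cross2 e w)" for v w :: pt
  proof -
    have "(\<sigma> * cross2 e v) * (\<sigma> * cross2 e w) = (\<sigma> * \<sigma>) * (cross2 e v * cross2 e w)" by (simp add: algebra_simps)
    then show ?thesis using frame_inner[OF e1, of v w] sg2 by simp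
  qed
  have Pc: "P c = L" unfolding P_def ce by (simp add: ne power2_eq_square[symmetric] dot_square_norm)
  have Qc: "Q c = 0" unfolding Q_def ce by (simp add: cross2_scaleR cross2_def)
  define p where "p = P x"
  define q where "q = Q x"
  have nxa: "(norm (x - a))\<^sup>2 = p\<^sup>2 + q\<^sup>2"
    unfolding power2_norm_eq_inner fr[of "x - a" "x - a"] p_def q_def P_def Q_def by (simp add: power2_eq_square)
  have dxa: "dist x a = sqrt (p\<^sup>2 + q\<^sup>2)" using nxa by (simp add: dist_norm real_sqrt_unique)
  have icx: "inner (c - a) (x - a) = L * p" unfolding ce p_def P_def by simp
  have pL: "2 * p \<ge> L"
  proof -
    have "(norm (x - c))\<^sup>2 \<le> (norm (x - a))\<^sup>2" using xc by (simp add: dist_norm norm_ge_zero power_mono)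
    moreover have "x - c = (x - a) - (c - a)" by simp
    then have "(norm (x - c))\<^sup>2 = (norm (x - a))\<^sup>2 - 2 * inner (c - a) (x - a) + (norm (c - a))\<^sup>2"
      by (simp add: power2_norm_eq_inner inner_diff_left inner_diff_right inner_commute)
    ultimately have "L * L \<le> 2 * (L * p)" using icx by (simp add: L_def power2_eq_square)
    then show ?thesis using L by (simp add: mult_le_cancel_left_pos)
  qed
  define b1 where "b1 = P b"
  define b2 where "b2 = Q b"
  have cb: "\<sigma> * cross2 (c - a) (b - a) = L * b2" unfolding ce b2_def Q_def by (simp add: cross2_scaleR)
  have b2: "b2 > 0" using cb sd L by (metis zero_less_mult_pos)
  define D where "D = inner (a - b) (c - b)"
  have D: "D = b1\<^sup>2 - L * b1 + b2\<^sup>2"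
  proof -
    have "D = inner (b - a) (b - a) - inner (c - a) (b - a)"
      unfolding D_def by (simp add: inner_diff_left inner_diff_right inner_commute)
    also have "inner (b - a) (b - a) = b1\<^sup>2 + b2\<^sup>2" unfolding fr[of "b - a" "b - a"] b1_def b2_def P_def Q_def by (simp add: power2_eq_square)
    also have "inner (c - a) (b - a) = L * b1" unfolding ce b1_def P_def by simp
    finally show ?thesis by simp
  qed
  have ba: "b \<noteq> a" and bc: "b \<noteq> c" using sd by (auto simp: cross2_def)
  define N where "N = norm (a - b) * norm (c - b)"
  have N0: "N > 0" using ba bc by (simp add: N_def)
  have NN: "N\<^sup>2 = D\<^sup>2 + (L * b2)\<^sup>2"
  proof -
    have "N\<^sup>2 = D\<^sup>2 + (cross2 (a - b) (c - b))\<^sup>2" unfolding N_def D_def power_mult_distrib lagrange2 ..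
    also have "(cross2 (a - b) (c - b))\<^sup>2 = (\<sigma> * cross2 (c - a) (b - a))\<^sup>2"
      unfolding cross2_swap_tri power_mult_distrib using sg2 by (simp add: power2_eq_square)
    finally show ?thesis unfolding cb .
  qed
  obtain \<nu> \<beta> where nb: "inner \<nu> b < \<beta>" and ny: "\<forall>y\<in>H. \<beta> < inner \<nu> y"
    using separating_hyperplane_closed_point[OF H bH] by blast
  define m where "m = - \<nu>"
  have mb: "inner m y < inner m b" if "y \<in> H" for y
  proof -
    have "\<beta> < inner \<nu> y" using ny that by blast
    then show ?thesis using nb by (simp add: m_def)
  qed
  have m0: "m \<noteq> 0" using mb[OF aH] by auto
  define n where "n = (1 / norm m) *\<^sub>R m"
  have nn: "norm n = 1" using m0 by (simp add: n_def)
  have nb2: "inner n y < inner n b" if "y \<in> H" for y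
    using mb[OF that] m0 by (simp add: n_def divide_strict_right_mono)
  define n1 where "n1 = inner e n"
  define n2 where "n2 = \<sigma> * cross2 e n"
  have n12: "n1\<^sup>2 + n2\<^sup>2 = 1"
  proof -
    have "inner n n = n1\<^sup>2 + n2\<^sup>2" unfolding fr[of n n] n1_def n2_def by (simp add: power2_eq_square)
    then show ?thesis using nn by (simp add: dot_square_norm)
  qed
  have nya: "inner n (y - a) = n1 * P y + n2 * Q y" for y
    unfolding fr[of n "y - a"] n1_def n2_def P_def Q_def ..
  have sep1: "n1 * b1 + n2 * b2 > 0"
    using nb2[OF aH] nya[of b] unfolding b1_def b2_def by (simp add: inner_diff_right)
  have sep2: "n1 * b1 + n2 * b2 > n1 * L"
  proof -
    have "inner n (c - a) < inner n (b - a)" using nb2[OF cH] by (simp add: inner_diff_right)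
    then show ?thesis using nya[of c] nya[of b] Pc Qc unfolding b1_def b2_def by simp
  qed
  have sep3: "n1 * b1 + n2 * b2 > n1 * p + n2 * q + \<rho>"
  proof -
    have "x + \<rho> *\<^sub>R n \<in> cball x \<rho>" using nn rho by (simp add: dist_norm)
    then have "inner n (x + \<rho> *\<^sub>R n - a) < inner n (b - a)" using nb2 E by (auto simp: inner_diff_right)
    moreover have "inner n (x + \<rho> *\<^sub>R n - a) = inner n (x - a) + \<rho>"
      using nn by (simp add: inner_diff_right inner_add_right dot_square_norm)
    ultimately show ?thesis using nya[of x] nya[of b] unfolding b1_def b2_def p_def q_def by simp
  qed
  have qp: "\<sigma> * cross2 (c - a) (x - a) / inner (c - a) (x - a) = q / p"
  proof -
    have "\<sigma> * cross2 (c - a) (x - a) = L * q" unfolding ce q_def Q_def by (simp add: cross2_scaleR)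
    then show ?thesis unfolding icx using L by simp
  qed
  have "arccos (D/N) \<le> pi - (arcsin (min 1 (\<rho> / dist x a)) + arctan (q/p))"
    by (rule side[OF L pL rho dxa refl refl b2 _ N0 NN D]) (use n12 sep1 sep2 sep3 in blast)
  then show ?thesis unfolding qp angle_def D_def N_def .
qed



lemma cross0_par:
  assumes "cross2 u v = 0" "u \<noteq> 0"
  shows "v = (inner v u / (norm u)\<^sup>2) *\<^sub>R u"
proof -
  have "(norm u)\<^sup>2 > 0" using assms(2) by simp
  then have S: "(u$1)\<^sup>2 + (u$2)\<^sup>2 > 0" using norm2[of u] by simp
  have c: "u$1 * v$2 = u$2 * v$1" using assms(1) by (simp add: cross2_def)
  have "v$1 * ((u$1)\<^sup>2 + (u$2)\<^sup>2) = (v$1 * u$1 + v$2 * u$2) * u$1"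
  proof -
    have "v$1 * ((u$1)\<^sup>2 + (u$2)\<^sup>2) = v$1 * (u$1)\<^sup>2 + u$2 * (u$2 * v$1)" by (simp add: power2_eq_square algebra_simps)
    also have "\<dots> = v$1 * (u$1)\<^sup>2 + u$2 * (u$1 * v$2)" using c by simp
    finally show ?thesis by (simp add: power2_eq_square algebra_simps)
  qed
  moreover have "v$2 * ((u$1)\<^sup>2 + (u$2)\<^sup>2) = (v$1 * u$1 + v$2 * u$2) * u$2"
  proof -
    have "v$2 * ((u$1)\<^sup>2 + (u$2)\<^sup>2) = v$2 * (u$2)\<^sup>2 + u$1 * (u$1 * v$2)" by (simp add: power2_eq_square algebra_simps)
    also have "\<dots> = v$2 * (u$2)\<^sup>2 + u$1 * (u$2 * v$1)" using c by simp
    finally show ?thesis by (simp add: power2_eq_square algebra_simps)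
  qed
  ultimately have h1: "v$1 * ((u$1)\<^sup>2 + (u$2)\<^sup>2) = (v$1 * u$1 + v$2 * u$2) * u$1"
    and h2: "v$2 * ((u$1)\<^sup>2 + (u$2)\<^sup>2) = (v$1 * u$1 + v$2 * u$2) * u$2" by auto
  have "(inner v u / (norm u)\<^sup>2) * u$i = v$i" if "i = 1 \<or> i = 2" for i
  proof -
    have "(inner v u / (norm u)\<^sup>2) * u$i = ((v$1 * u$1 + v$2 * u$2) * u$i) / ((u$1)\<^sup>2 + (u$2)\<^sup>2)"
      unfolding inner2 norm2 by simp
    also have "(v$1 * u$1 + v$2 * u$2) * u$i = v$i * ((u$1)\<^sup>2 + (u$2)\<^sup>2)" using that h1 h2 by auto
    also have "v$i * ((u$1)\<^sup>2 + (u$2)\<^sup>2) / ((u$1)\<^sup>2 + (u$2)\<^sup>2) = v$i"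
      by (metis S less_irrefl nonzero_mult_div_cancel_right)
    finally show ?thesis .
  qed
  then show ?thesis unfolding vec_eq_iff forall_2 by simp
qed

lemma cross0_collinear:
  assumes "cross2 (c - a) (b - a) = 0"
  shows "collinear {a,b,c}"
proof (cases "a = c")
  case True then show ?thesis by (simp add: collinear_3_expand)
next
  case False
  define t where "t = inner (b - a) (c - a) / (norm (c - a))\<^sup>2"
  have "b - a = t *\<^sub>R (c - a)" unfolding t_def using cross0_par[OF assms] False by simp
  then have "b = (1 - t) *\<^sub>R a + (1 - (1 - t)) *\<^sub>R c" by (simp add: algebra_simps)
  then show ?thesis unfolding collinear_3_expand by blast
qed

lemma cross2_add: "cross2 (u + v) w = cross2 u w + cross2 v w"
  by (simp add: cross2_def algebra_simps)

lemma cross2_add2: "cross2 w (u + v) = cross2 w u + cross2 w v"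
  by (simp add: cross2_def algebra_simps)

lemma bary:
  "cross2 (c - a) (d - a) *\<^sub>R (y - a) = cross2 (y - a) (d - a) *\<^sub>R (c - a) + cross2 (c - a) (y - a) *\<^sub>R (d - a)"
  unfolding vec_eq_iff forall_2 cross2_def by (simp add: algebra_simps)

lemma hull3_cross:
  assumes "b \<in> convex hull {c, d, a}"
  obtains v where "0 \<le> v" "v \<le> 1" "cross2 (c - a) (b - a) = v * cross2 (c - a) (d - a)"
    "v = 1 \<Longrightarrow> b = d"
proof -
  obtain u v w where uvw: "0 \<le> u" "0 \<le> v" "0 \<le> w" "u + v + w = 1" "b = u *\<^sub>R c + v *\<^sub>R d + w *\<^sub>R a"
    using assms unfolding convex_hull_3 by blast
  have w: "w = 1 - u - v" using uvw by simp
  have "cross2 (c - a) (b - a) = v * cross2 (c - a) (d - a)"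
    unfolding uvw(5) w by (simp add: cross2_def algebra_simps)
  moreover have "v = 1 \<Longrightarrow> b = d"
  proof -
    assume v1: "v = 1"
    have u0: "u = 0" using uvw v1 by linarith
    have w0: "w = 0" using uvw v1 by linarith
    show "b = d" unfolding uvw(5) u0 w0 v1 by simp
  qed
  moreover have "v \<le> 1" using uvw by simp
  ultimately show ?thesis using that uvw by blast
qed

lemma opp_sides:
  assumes f1: "triangular_face C S a b c" and f2: "triangular_face C S c d a" and bd: "b \<noteq> d"
  shows "cross2 (c - a) (b - a) * cross2 (c - a) (d - a) < 0"
proof -
  define Xb where "Xb = cross2 (c - a) (b - a)"
  define Xd where "Xd = cross2 (c - a) (d - a)"
  have nc1: "\<not> collinear {a,b,c}" and nc2: "\<not> collinear {c,d,a}"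
    using f1 f2 unfolding triangular_face_def by auto
  have Xb0: "Xb \<noteq> 0" using nc1 cross0_collinear unfolding Xb_def by blast
  have Xd0: "Xd \<noteq> 0"
  proof
    assume "Xd = 0"
    then have "collinear {a,d,c}" using cross0_collinear unfolding Xd_def by blast
    moreover have "{a,d,c} = {c,d,a}" by auto
    ultimately show False using nc2 by simp
  qed
  show ?thesis
  proof (rule ccontr)
    assume "\<not> ?thesis"
    then have pos: "Xb * Xd > 0" using Xb0 Xd0 unfolding Xb_def Xd_def
      by (metis linorder_neqE_linordered_idom mult_eq_0_iff)
    define T1 where "T1 = interior (convex hull {a,b,c})"
    define T2 where "T2 = interior (convex hull {c,d,a})"
    have dim2: "DIM(pt) = 2" by simp
    have T1c: "T1 \<in> components (- delaunay_drawing C S)" using f1 unfolding triangular_face_def T1_def by auto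
    have T2c: "T2 \<in> components (- delaunay_drawing C S)" using f2 unfolding triangular_face_def T2_def by auto
    define B where "B = cross2 (b - a) (d - a)"
    define K where "K = (\<bar>B\<bar> + \<bar>Xb\<bar>) / \<bar>Xd\<bar>"
    have K0: "K \<ge> 0" unfolding K_def by simp
    define \<epsilon> where "\<epsilon> = 1 / (4 * K + 4)"
    have e0: "\<epsilon> > 0" "\<epsilon> \<le> 1/4" using K0 by (auto simp: \<epsilon>_def field_simps)
    have eK: "\<epsilon> * K < 1/4" using K0 by (simp add: \<epsilon>_def field_simps)
    have eB: "\<bar>\<epsilon> * B / Xd\<bar> < 1/4"
    proof -
      have "\<bar>\<epsilon> * B / Xd\<bar> = \<epsilon> * (\<bar>B\<bar> / \<bar>Xd\<bar>)" using e0 by (simp add: abs_mult abs_divide)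
      also have "\<dots> \<le> \<epsilon> * K" unfolding K_def using e0 Xd0 by (intro mult_left_mono divide_right_mono) auto
      finally have "\<bar>\<epsilon> * B / Xd\<bar> \<le> \<epsilon> * K" .
      then show ?thesis using eK by linarith
    qed
    have eXb: "\<bar>\<epsilon> * Xb / Xd\<bar> < 1/4"
    proof -
      have "\<bar>\<epsilon> * Xb / Xd\<bar> = \<epsilon> * (\<bar>Xb\<bar> / \<bar>Xd\<bar>)" using e0 by (simp add: abs_mult abs_divide)
      also have "\<dots> \<le> \<epsilon> * K" unfolding K_def using e0 Xd0 by (intro mult_left_mono divide_right_mono) auto
      finally have "\<bar>\<epsilon> * Xb / Xd\<bar> \<le> \<epsilon> * K" .
      then show ?thesis using eK by linarith
    qed
    define y where "y = ((1 - \<epsilon>)/2) *\<^sub>R a + \<epsilon> *\<^sub>R b + ((1 - \<epsilon>)/2) *\<^sub>R c"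
    have "\<exists>x y' z. 0 < x \<and> 0 < y' \<and> 0 < z \<and> x + y' + z = 1 \<and> x *\<^sub>R a + y' *\<^sub>R b + z *\<^sub>R c = y"
      apply (rule exI[of _ "(1 - \<epsilon>)/2"])
      apply (rule exI[of _ \<epsilon>])
      apply (rule exI[of _ "(1 - \<epsilon>)/2"])
      using e0 by (auto simp: y_def)
    then have yT1: "y \<in> T1"
      unfolding T1_def interior_convex_hull_3_minimal[OF nc1 dim2] by simp
    define z1 where "z1 = cross2 (y - a) (d - a) / Xd"
    define z2 where "z2 = cross2 (c - a) (y - a) / Xd"
    have ya: "y - a = ((1 - \<epsilon>)/2) *\<^sub>R (c - a) + \<epsilon> *\<^sub>R (b - a)"
      unfolding vec_eq_iff forall_2 y_def by (simp add: field_simps)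
    have c1: "cross2 (y - a) (d - a) = ((1 - \<epsilon>)/2) * Xd + \<epsilon> * B"
      unfolding ya Xd_def B_def cross2_add cross2_scaleR ..
    have c2: "cross2 (c - a) (y - a) = \<epsilon> * Xb"
      unfolding ya Xb_def cross2_add2 cross2_scaleR by (simp add: cross2_def)
    have z1e: "z1 = (1 - \<epsilon>)/2 + \<epsilon> * B / Xd" unfolding z1_def c1 using Xd0 by (simp add: field_simps)
    have z2e: "z2 = \<epsilon> * Xb / Xd" unfolding z2_def c2 by simp
    have eB': "\<epsilon> * B / Xd < 1/4 \<and> - (\<epsilon> * B / Xd) < 1/4" using eB by (simp only: abs_less_iff)
    have eXb': "\<epsilon> * Xb / Xd < 1/4 \<and> - (\<epsilon> * Xb / Xd) < 1/4" using eXb by (simp only: abs_less_iff)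
    define tB where "tB = \<epsilon> * B / Xd"
    define tX where "tX = \<epsilon> * Xb / Xd"
    have tB: "tB < 1/4" "- tB < 1/4" using eB' unfolding tB_def by auto
    have tX: "tX < 1/4" "- tX < 1/4" using eXb' unfolding tX_def by auto
    have z1t: "z1 = (1 - \<epsilon>)/2 + tB" using z1e unfolding tB_def .
    have z2t: "z2 = tX" using z2e unfolding tX_def .
    have z1p: "z1 > 0" using z1t tB e0 unfolding diff_divide_distrib by linarith
    have z2p: "z2 > 0"
    proof -
      have "Xb / Xd > 0" using pos by (metis divide_pos_pos divide_neg_neg mult_less_0_iff linorder_neqE_linordered_idom zero_less_mult_iff)
      then have "0 < \<epsilon> * (Xb / Xd)" using e0(1) by (intro mult_pos_pos)
      then show ?thesis unfolding z2e by (simp only: times_divide_eq_right)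
    qed
    have z3p: "1 - z1 - z2 > 0" using z1t z2t tB tX e0 unfolding diff_divide_distrib by linarith
    have yrep: "y = z1 *\<^sub>R c + z2 *\<^sub>R d + (1 - z1 - z2) *\<^sub>R a"
    proof -
      have "Xd *\<^sub>R (y - a) = cross2 (y - a) (d - a) *\<^sub>R (c - a) + cross2 (c - a) (y - a) *\<^sub>R (d - a)"
        unfolding Xd_def by (rule bary)
      then have "(1/Xd) *\<^sub>R (Xd *\<^sub>R (y - a)) = (1/Xd) *\<^sub>R (cross2 (y - a) (d - a) *\<^sub>R (c - a) + cross2 (c - a) (y - a) *\<^sub>R (d - a))"
        by simp
      then have "y - a = z1 *\<^sub>R (c - a) + z2 *\<^sub>R (d - a)"
        using Xd0 unfolding z1_def z2_def by (simp add: scaleR_add_right divide_inverse mult.commute)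
      then show ?thesis by (simp add: algebra_simps)
    qed
    have "\<exists>x y' z. 0 < x \<and> 0 < y' \<and> 0 < z \<and> x + y' + z = 1 \<and> x *\<^sub>R c + y' *\<^sub>R d + z *\<^sub>R a = y"
      apply (rule exI[of _ z1])
      apply (rule exI[of _ z2])
      apply (rule exI[of _ "1 - z1 - z2"])
      using z1p z2p z3p yrep by simp
    then have yT2: "y \<in> T2"
      unfolding T2_def interior_convex_hull_3_minimal[OF nc2 dim2] by simp
    have T12: "T1 = T2" using components_eq[OF T1c T2c] yT1 yT2 by blast
    have cl1: "convex hull {a,b,c} \<subseteq> closure T1"
    proof -
      have "closure T1 = closure (convex hull {a,b,c})" unfolding T1_def
        by (rule convex_closure_interior) (use yT1 T1_def in auto)
      then show ?thesis using closure_subset by blast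
    qed
    have cl2: "convex hull {c,d,a} \<subseteq> closure T2"
    proof -
      have "closure T2 = closure (convex hull {c,d,a})" unfolding T2_def
        by (rule convex_closure_interior) (use yT2 T2_def in auto)
      then show ?thesis using closure_subset by blast
    qed
    have cl1': "closure T1 \<subseteq> convex hull {a,b,c}"
      unfolding T1_def by (rule closure_minimal[OF interior_subset]) (simp add: compact_imp_closed finite_imp_compact_convex_hull)
    have cl2': "closure T2 \<subseteq> convex hull {c,d,a}"
      unfolding T2_def by (rule closure_minimal[OF interior_subset]) (simp add: compact_imp_closed finite_imp_compact_convex_hull)
    have bin: "b \<in> convex hull {c,d,a}" using cl1 cl2' T12 hull_inc[of b "{a,b,c}"] by blast
    have din: "d \<in> convex hull {a,b,c}" using cl2 cl1' T12 hull_inc[of d "{c,d,a}"] by blast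
    have din': "d \<in> convex hull {c, b, a}" using din by (simp add: insert_commute)
    obtain v where v: "0 \<le> v" "v \<le> 1" "Xb = v * Xd" "v = 1 \<Longrightarrow> b = d"
      using hull3_cross[OF bin] unfolding Xb_def Xd_def by blast
    obtain v' where v': "0 \<le> v'" "v' \<le> 1" "Xd = v' * Xb"
      using hull3_cross[OF din'] unfolding Xb_def Xd_def by blast
    have "Xb = (v * v') * Xb" using v(3) v'(3) by simp
    then have vv: "v * v' = 1" using Xb0 by simp
    have "v = 1"
    proof (rule ccontr)
      assume "v \<noteq> 1" then have "v < 1" using v by simp
      moreover have "v * v' \<le> v" using mult_left_mono[of v' 1 v] v'(2) v(1) by simp
      ultimately have "v * v' < 1" by simp
      then show False using vv by simp
    qed
    then show False using v(4) bd by simp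
  qed
qed


lemma core:
  fixes H :: "pt set" and a b c d x :: pt and \<alpha> r :: real
  assumes H: "convex H" "closed H" and aH: "a \<in> H" and cH: "c \<in> H" and bH: "b \<notin> H" and dH: "d \<notin> H"
    and E: "cball x (\<alpha> * r) \<subseteq> H" and Dr: "H \<subseteq> cball x r" and al: "0 < \<alpha>" "\<alpha> \<le> 1" and r: "r > 0"
    and xc: "dist x c \<le> dist x a" and ac: "a \<noteq> c"
    and sb: "cross2 (c - a) (b - a) > 0" and sd: "cross2 (c - a) (d - a) < 0"
  shows "angle a b c + angle a d c \<le> 2*pi - 2*arcsin \<alpha>"
proof -
  have rho: "\<alpha> * r \<ge> 0" using al r by simp
  define \<gamma> where "\<gamma> = arcsin (min 1 (\<alpha> * r / dist x a))"
  define t where "t = cross2 (c - a) (x - a) / inner (c - a) (x - a)"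
  have g1: "angle a b c \<le> pi - (\<gamma> + arctan (1 * cross2 (c - a) (x - a) / inner (c - a) (x - a)))"
    unfolding \<gamma>_def by (rule geo_side[OF H aH cH bH E rho ac xc]) (use sb in auto)
  have g2: "angle a d c \<le> pi - (\<gamma> + arctan (-1 * cross2 (c - a) (x - a) / inner (c - a) (x - a)))"
    unfolding \<gamma>_def by (rule geo_side[OF H aH cH dH E rho ac xc]) (use sd in auto)
  have m: "arctan (-1 * cross2 (c - a) (x - a) / inner (c - a) (x - a)) = - arctan t"
    unfolding t_def by (simp add: arctan_minus)
  have g1': "angle a b c \<le> pi - (\<gamma> + arctan t)" using g1 unfolding t_def by simp
  have sum: "angle a b c + angle a d c \<le> 2*pi - 2*\<gamma>" using g1' g2 unfolding m by simp
  have da: "dist x a > 0"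
  proof (rule ccontr)
    assume "\<not> dist x a > 0"
    then have "dist x a = 0" by simp
    then have "dist x c = 0" using xc by simp
    then show False using \<open>dist x a = 0\<close> ac by simp
  qed
  have dr: "dist x a \<le> r" using Dr aH by auto
  have "\<alpha> * dist x a \<le> \<alpha> * r" using dr al by simp
  then have "\<alpha> \<le> \<alpha> * r / dist x a" using da by (simp add: field_simps)
  then have am: "\<alpha> \<le> min 1 (\<alpha> * r / dist x a)" using al by simp
  have "arcsin \<alpha> \<le> \<gamma>" unfolding \<gamma>_def by (rule arcsin_le_arcsin) (use al am in auto)
  then show ?thesis using sum by linarith
qed

lemma dist_homothet:
  fixes x0 z t :: pt and l :: real
  assumes "l > 0" shows "dist (l *\<^sub>R x0 + t) (l *\<^sub>R z + t) = l * dist x0 z"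
proof -
  have "l *\<^sub>R x0 + t - (l *\<^sub>R z + t) = l *\<^sub>R (x0 - z)" by (simp add: algebra_simps)
  then show ?thesis using assms by (simp add: dist_norm)
qed

theorem mainTheorem17:
  fixes \<alpha> :: real and C S :: "pt set" and a b c d :: pt
  assumes "0 < \<alpha>" "\<alpha> \<le> 1"
    and "convex_body C" "fat \<alpha> C"
    and "finite S"
    and "triangular_face C S a b c" "triangular_face C S c d a"
    and "b \<noteq> d"
  shows "angle a b c + angle c d a \<le> 2 * pi - 2 * arcsin \<alpha>"
proof -
  note al = assms(1,2)
  have e_ab: "delaunay_edge C S a b" and e_bc: "delaunay_edge C S b c" and e_ca: "delaunay_edge C S c a"
    using assms(6) unfolding triangular_face_def by auto
  have e_cd: "delaunay_edge C S c d" and e_da: "delaunay_edge C S d a"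
    using assms(7) unfolding triangular_face_def by auto
  obtain l t where lt: "l > 0" "c \<in> homothet C l t" "a \<in> homothet C l t" "homothet C l t \<inter> S \<subseteq> {c, a}"
    using e_ca unfolding delaunay_edge_def by blast
  have ac: "a \<noteq> c" using e_ca unfolding delaunay_edge_def by auto
  have bS: "b \<in> S" "b \<noteq> a" "b \<noteq> c" using e_ab e_bc unfolding delaunay_edge_def by auto
  have dS: "d \<in> S" "d \<noteq> c" "d \<noteq> a" using e_cd e_da unfolding delaunay_edge_def by auto
  define H where "H = homothet C l t"
  have Heq: "H = (\<lambda>y. t + l *\<^sub>R y) ` C" unfolding H_def homothet_def by (simp add: add.commute)
  have bH: "b \<notin> H" using lt(4) bS unfolding H_def by auto
  have dH: "d \<notin> H" using lt(4) dS unfolding H_def by auto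
  have aH: "a \<in> H" and cH: "c \<in> H" using lt unfolding H_def by auto
  have cvx: "convex C" and cpt: "compact C" using assms(3) unfolding convex_body_def by auto
  have Hc: "convex H" unfolding Heq by (rule convex_affinity[OF cvx])
  have Hcl: "closed H" unfolding Heq by (rule compact_imp_closed[OF compact_affinity[OF cpt]])
  obtain x0 r0 where r0: "r0 > 0" "cball x0 (\<alpha> * r0) \<subseteq> C" "C \<subseteq> cball x0 r0"
    using assms(4) unfolding fat_def by blast
  define x where "x = l *\<^sub>R x0 + t"
  define r where "r = l * r0"
  have r: "r > 0" using lt(1) r0(1) by (simp add: r_def)
  have E: "cball x (\<alpha> * r) \<subseteq> H"
  proof
    fix y assume y: "y \<in> cball x (\<alpha> * r)"
    define z where "z = (1 / l) *\<^sub>R (y - t)"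
    have yz: "y = l *\<^sub>R z + t" using lt(1) by (simp add: z_def)
    have "l * dist x0 z \<le> l * (\<alpha> * r0)"
      using y dist_homothet[OF lt(1), of x0 t z] unfolding yz x_def r_def by (simp add: algebra_simps)
    then have "dist x0 z \<le> \<alpha> * r0" using lt(1) by simp
    then have "z \<in> C" using r0(2) by auto
    then show "y \<in> H" unfolding yz H_def homothet_def by auto
  qed
  have Dr: "H \<subseteq> cball x r"
  proof
    fix y assume "y \<in> H"
    then obtain z where z: "z \<in> C" "y = l *\<^sub>R z + t" unfolding H_def homothet_def by auto
    have "dist x0 z \<le> r0" using z(1) r0(3) by auto
    then have "l * dist x0 z \<le> l * r0" using lt(1) by simp
    then show "y \<in> cball x r" unfolding z(2) x_def r_def using dist_homothet[OF lt(1), of x0 t z] by simp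
  qed
  have opp: "cross2 (c - a) (b - a) * cross2 (c - a) (d - a) < 0"
    by (rule opp_sides[OF assms(6,7,8)])
  have sides: "(cross2 (c - a) (b - a) > 0 \<and> cross2 (c - a) (d - a) < 0) \<or>
               (cross2 (c - a) (b - a) < 0 \<and> cross2 (c - a) (d - a) > 0)"
    using opp by (auto simp: mult_less_0_iff)
  have sym1: "angle a d c = angle c d a" by (rule angle_sym)
  have sym2: "angle c b a = angle a b c" by (rule angle_sym)
  show ?thesis
  proof (cases "dist x c \<le> dist x a")
    case True
    show ?thesis
    proof (cases "cross2 (c - a) (b - a) > 0")
      case True
      then have sd: "cross2 (c - a) (d - a) < 0" using sides by auto
      have "angle a b c + angle a d c \<le> 2*pi - 2*arcsin \<alpha>"
        by (rule core[OF Hc Hcl aH cH bH dH E Dr al r \<open>dist x c \<le> dist x a\<close> ac True sd])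
      then show ?thesis using sym1 by simp
    next
      case False
      then have sb: "cross2 (c - a) (b - a) < 0" and sd: "cross2 (c - a) (d - a) > 0" using sides by auto
      have "angle a d c + angle a b c \<le> 2*pi - 2*arcsin \<alpha>"
        by (rule core[OF Hc Hcl aH cH dH bH E Dr al r \<open>dist x c \<le> dist x a\<close> ac sd sb])
      then show ?thesis using sym1 by simp
    qed
  next
    case False
    then have xa: "dist x a \<le> dist x c" by simp
    have ca: "c \<noteq> a" using ac by simp
    show ?thesis
    proof (cases "cross2 (c - a) (b - a) < 0")
      case True
      then have sd: "cross2 (c - a) (d - a) > 0" using sides by auto
      have sb': "cross2 (a - c) (b - c) > 0" using True cross2_swap_ac[of a c b] by simp
      have sd': "cross2 (a - c) (d - c) < 0" using sd cross2_swap_ac[of a c d] by simp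
      have "angle c b a + angle c d a \<le> 2*pi - 2*arcsin \<alpha>"
        by (rule core[OF Hc Hcl cH aH bH dH E Dr al r xa ca sb' sd'])
      then show ?thesis using sym2 by simp
    next
      case False
      then have sb: "cross2 (c - a) (b - a) > 0" and sd: "cross2 (c - a) (d - a) < 0" using sides by auto
      have sb': "cross2 (a - c) (b - c) < 0" using sb cross2_swap_ac[of a c b] by simp
      have sd': "cross2 (a - c) (d - c) > 0" using sd cross2_swap_ac[of a c d] by simp
      have "angle c d a + angle c b a \<le> 2*pi - 2*arcsin \<alpha>"
        by (rule core[OF Hc Hcl cH aH dH bH E Dr al r xa ca sd' sb'])
      then show ?thesis using sym2 by simp
    qed
  qed
qed

end
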